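(* Let $\Theta=(\alpha,\rho_r,\rho_d,\rho_s,\rho_0,T)$ with $\alpha>1$, $\rho_r,\rho_d,\rho_s,\rho_0>0$, $T>1$, such that $K_{max}(\Theta):=\min\big(\frac T4,\frac{\rho_r}{3\rho_0},\frac{3\rho_d}{2\rho_0}\big)>10$. Then for every $R>0$, $\zeta'_{zf}(R,\Theta)<\zeta'_{csi}(R,\Theta)$.
   Context: For reals $M>K$, $1\le K\le\tau<T$, $$\gamma_u=\frac{K+\tau}{2\tau(M-K)}\Big(2^{\frac{R}{K(1-\tau/T)}}-1\Big)+\sqrt{\Big(\frac{K+\tau}{2\tau(M-K)}\Big(2^{\frac{R}{K(1-\tau/T)}}-1\Big)\Big)^2+\frac{2^{\frac{R}{K(1-\tau/T)}}-1}{\tau(M-K)}},$$ $$\frac{R}{\zeta_{zf}(M,K,\tau,R,\Theta)}=\alpha K\gamma_u+\rho_s+K\Big(\rho_d+\frac{8K^2\rho_0}{3T}\Big)+M\Big(\rho_r+2K\rho_0+\frac{4K^2\rho_0}{T}\Big).$$ $\zeta'_{zf}(R,\Theta)$ is the supremum of $\zeta_{zf}$ over real $(M,K,\tau)$ with $1\le K\le K_{max}(\Theta)$, $K\le\tau<T$, $M>K$. For real $M>K\ge1$, $\frac{1}{\zeta_{csi}(M,K,R,\Theta)}=\frac1R\big[\frac{\alpha K}{M-K}(2^{R/K}-1)+M\rho_r+K\rho_d+\rho_s\big]$ and $\zeta'_{csi}(R,\Theta)$ is its maximum over real $(M,K)$ with $1\le K\le K_{max}(\Theta)$, $M>K$.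 *)

theory Defs
  imports Complex_Main
begin

definition K_max :: "real \<Rightarrow> real \<Rightarrow> real \<Rightarrow> real \<Rightarrow> real" where
  "K_max T rho_r rho_d rho_0 = min (T / 4) (min (rho_r / (3 * rho_0)) (3 * rho_d / (2 * rho_0)))"

definition gamma_u :: "real \<Rightarrow> real \<Rightarrow> real \<Rightarrow> real \<Rightarrow> real \<Rightarrow> real" where
  "gamma_u M K tau R T =
    (let e = 2 powr (R / (K * (1 - tau / T))) - 1;
         c = (K + tau) / (2 * tau * (M - K)) * e
     in c + sqrt (c\<^sup>2 + e / (tau * (M - K))))"

definition zeta_zf :: "real \<Rightarrow> real \<Rightarrow> real \<Rightarrow> real \<Rightarrow> real \<Rightarrow> real \<Rightarrow> real \<Rightarrow> real \<Rightarrow> real \<Rightarrow> real \<Rightarrow> real" where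
  "zeta_zf M K tau R alpha rho_r rho_d rho_s rho_0 T =
    R / (alpha * K * gamma_u M K tau R T + rho_s + K * (rho_d + 8 * K\<^sup>2 * rho_0 / (3 * T))
         + M * (rho_r + 2 * K * rho_0 + 4 * K\<^sup>2 * rho_0 / T))"

definition zeta'_zf :: "real \<Rightarrow> real \<Rightarrow> real \<Rightarrow> real \<Rightarrow> real \<Rightarrow> real \<Rightarrow> real \<Rightarrow> real" where
  "zeta'_zf R alpha rho_r rho_d rho_s rho_0 T =
    Sup {zeta_zf M K tau R alpha rho_r rho_d rho_s rho_0 T | M K tau.
           1 \<le> K \<and> K \<le> K_max T rho_r rho_d rho_0 \<and> K \<le> tau \<and> tau < T \<and> M > K}"

definition zeta_csi :: "real \<Rightarrow> real \<Rightarrow> real \<Rightarrow> real \<Rightarrow> real \<Rightarrow> real \<Rightarrow> real \<Rightarrow> real" where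
  "zeta_csi M K R alpha rho_r rho_d rho_s =
    1 / ((1 / R) * (alpha * K / (M - K) * (2 powr (R / K) - 1) + M * rho_r + K * rho_d + rho_s))"

definition zeta'_csi :: "real \<Rightarrow> real \<Rightarrow> real \<Rightarrow> real \<Rightarrow> real \<Rightarrow> real \<Rightarrow> real \<Rightarrow> real" where
  "zeta'_csi R alpha rho_r rho_d rho_s rho_0 T =
    Sup {zeta_csi M K R alpha rho_r rho_d rho_s | M K.
           1 \<le> K \<and> K \<le> K_max T rho_r rho_d rho_0 \<and> M > K}"

end

theory Submission
  imports Defs
begin

lemma gamma_bound:
  fixes M K tau R T :: real
  assumes "1 \<le> K" "K \<le> tau" "tau < T" "M > K" "R > 0"
  shows "gamma_u M K tau R T \<ge> (2 powr (R / K) - 1) / (M - K)"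
proof -
  define e where "e = 2 powr (R / (K * (1 - tau / T))) - 1"
  define c where "c = (K + tau) / (2 * tau * (M - K)) * e"
  have T0: "T > 0" using assms by linarith
  have q: "0 < 1 - tau / T" "1 - tau/T \<le> 1" using assms T0 by (auto simp: field_simps)
  have Kp: "K > 0" using assms by linarith
  have "R / K \<le> R / (K * (1 - tau / T))"
    using q Kp assms(5) by (simp add: divide_left_mono mult_pos_pos mult_le_cancel_left1)
  hence "2 powr (R/K) \<le> 2 powr (R / (K * (1 - tau / T)))" by simp
  hence ee: "2 powr (R/K) - 1 \<le> e" unfolding e_def by simp
  have "2 powr (R/K) > 1" using Kp assms(5) by simp
  hence e0: "e > 0" using ee by linarith
  have tp: "tau > 0" "M - K > 0" using assms by auto
  have c0: "c \<ge> 0" unfolding c_def using tp e0 Kp by simp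
  have "sqrt (c\<^sup>2 + e / (tau * (M - K))) \<ge> sqrt (c\<^sup>2)"
    using tp e0 by (intro real_sqrt_le_mono) simp
  hence g: "gamma_u M K tau R T \<ge> 2 * c"
    unfolding gamma_u_def Let_def e_def[symmetric] c_def[symmetric] using c0 by simp
  have "2 * c = (1 + K / tau) * (e / (M - K))" unfolding c_def using tp
    by (simp add: field_simps)
  also have "\<dots> \<ge> 1 * (e / (M - K))" using tp Kp e0
    by (intro mult_right_mono) auto
  also have "1 * (e / (M - K)) = e / (M - K)" by simp
  finally show ?thesis using g ee tp
    by (smt (verit, best) divide_right_mono)
qed

lemma point_bound:
  fixes alpha rho_r rho_d rho_s rho_0 T R M K tau :: real
  assumes "alpha > 1" and "rho_r > 0" and "rho_d > 0" and "rho_s > 0" and "rho_0 > 0"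
    and "R > 0" and "1 \<le> K" "K \<le> tau" "tau < T" "M > K"
  defines "D \<equiv> alpha * K / (M - K) * (2 powr (R / K) - 1) + M * rho_r + K * rho_d + rho_s"
  shows "D > 0" "zeta_csi M K R alpha rho_r rho_d rho_s = R / D"
    "zeta_zf M K tau R alpha rho_r rho_d rho_s rho_0 T \<le> R / (D + 2 * rho_0)"
proof -
  have Kp: "K > 0" "M - K > 0" using assms by auto
  have "2 powr (R/K) > 1" using Kp assms(6) by simp
  hence t1: "alpha * K / (M - K) * (2 powr (R / K) - 1) \<ge> 0" using Kp assms(1) by simp
  have Mp: "M > 0" using Kp by linarith
  show Dp: "D > 0" unfolding D_def using t1 Mp Kp assms(2-4) by (smt (verit) mult_pos_pos)
  show "zeta_csi M K R alpha rho_r rho_d rho_s = R / D"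
    unfolding zeta_csi_def D_def by simp
  have gb: "gamma_u M K tau R T \<ge> (2 powr (R / K) - 1) / (M - K)"
    using gamma_bound assms by simp
  have "alpha * K * gamma_u M K tau R T \<ge> alpha * K * ((2 powr (R / K) - 1) / (M - K))"
    using gb Kp assms(1) by (intro mult_left_mono) auto
  hence a1: "alpha * K * gamma_u M K tau R T \<ge> alpha * K / (M - K) * (2 powr (R / K) - 1)"
    by simp
  have T0: "T > 0" using assms by linarith
  have b1: "K * (8 * K\<^sup>2 * rho_0 / (3 * T)) \<ge> 0" using Kp T0 assms(5) by simp
  have b2: "M * (4 * K\<^sup>2 * rho_0 / T) \<ge> 0" using Mp T0 assms(5) by simp
  have "M * K \<ge> 1" using assms(7,10) using mult_mono[of 1 M 1 K] by simp
  hence "2 * rho_0 * (M * K) \<ge> 2 * rho_0 * 1" using assms(5)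
    by (intro mult_left_mono) auto
  hence b3: "M * (2 * K * rho_0) \<ge> 2 * rho_0" by (simp add: algebra_simps)
  define Dz where "Dz = alpha * K * gamma_u M K tau R T + rho_s + K * (rho_d + 8 * K\<^sup>2 * rho_0 / (3 * T))
         + M * (rho_r + 2 * K * rho_0 + 4 * K\<^sup>2 * rho_0 / T)"
  have "Dz \<ge> D + 2 * rho_0" unfolding Dz_def D_def using a1 b1 b2 b3
    by (simp add: distrib_left)
  moreover have "D + 2 * rho_0 > 0" using Dp assms(5) by simp
  ultimately have "R / Dz \<le> R / (D + 2 * rho_0)" using assms(6)
    by (simp add: frac_le)
  thus "zeta_zf M K tau R alpha rho_r rho_d rho_s rho_0 T \<le> R / (D + 2 * rho_0)"
    unfolding zeta_zf_def Dz_def by simp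
qed

theorem lemma8:
  fixes alpha rho_r rho_d rho_s rho_0 T R :: real
  assumes "alpha > 1" and "rho_r > 0" and "rho_d > 0" and "rho_s > 0" and "rho_0 > 0"
    and "T > 1" and "K_max T rho_r rho_d rho_0 > 10" and "R > 0"
  shows "zeta'_zf R alpha rho_r rho_d rho_s rho_0 T < zeta'_csi R alpha rho_r rho_d rho_s rho_0 T"
proof -
  define A where "A = {zeta_zf M K tau R alpha rho_r rho_d rho_s rho_0 T | M K tau.
           1 \<le> K \<and> K \<le> K_max T rho_r rho_d rho_0 \<and> K \<le> tau \<and> tau < T \<and> M > K}"
  define B where "B = {zeta_csi M K R alpha rho_r rho_d rho_s | M K.
           1 \<le> K \<and> K \<le> K_max T rho_r rho_d rho_0 \<and> M > K}"
  define S where "S = Sup B"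
  have Bbdd: "bdd_above B"
  proof (rule bdd_aboveI[where M = "R / rho_s"])
    fix x assume "x \<in> B"
    then obtain M K where x: "x = zeta_csi M K R alpha rho_r rho_d rho_s" "1 \<le> K" "M > K"
      unfolding B_def by blast
    define D where "D = alpha * K / (M - K) * (2 powr (R / K) - 1) + M * rho_r + K * rho_d + rho_s"
    have Kp: "K > 0" "M - K > 0" using x by auto
    have "2 powr (R/K) > 1" using Kp assms(8) by simp
    hence "alpha * K / (M - K) * (2 powr (R / K) - 1) \<ge> 0" using Kp assms(1) by simp
    moreover have "M * rho_r \<ge> 0" "K * rho_d \<ge> 0" using Kp assms by auto
    ultimately have "D \<ge> rho_s" unfolding D_def by linarith
    hence "R / D \<le> R / rho_s" using assms(4,8) by (simp add: frac_le)
    moreover have "x = R / D" unfolding x D_def zeta_csi_def by simp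
    ultimately show "x \<le> R / rho_s" by simp
  qed
  have mem: "zeta_csi 2 1 R alpha rho_r rho_d rho_s \<in> B"
    unfolding B_def using assms(7) by force
  have "zeta_csi 2 1 R alpha rho_r rho_d rho_s > 0"
    using point_bound(1,2)[of alpha rho_r rho_d rho_s rho_0 R 1 1 T 2] assms by simp
  hence Sp: "S > 0" using cSup_upper[OF mem Bbdd] unfolding S_def by linarith
  have Ane: "A \<noteq> {}"
    unfolding A_def using assms(6,7) by force
  have bound: "z \<le> R * S / (R + 2 * rho_0 * S)" if "z \<in> A" for z
  proof -
    obtain M K tau where z: "z = zeta_zf M K tau R alpha rho_r rho_d rho_s rho_0 T"
      "1 \<le> K" "K \<le> K_max T rho_r rho_d rho_0" "K \<le> tau" "tau < T" "M > K"
      using \<open>z \<in> A\<close> unfolding A_def by blast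
    define D where "D = alpha * K / (M - K) * (2 powr (R / K) - 1) + M * rho_r + K * rho_d + rho_s"
    have pb: "D > 0" "zeta_csi M K R alpha rho_r rho_d rho_s = R / D" "z \<le> R / (D + 2 * rho_0)"
      using point_bound[of alpha rho_r rho_d rho_s rho_0 R K tau T M] assms z
      unfolding D_def by auto
    have "zeta_csi M K R alpha rho_r rho_d rho_s \<in> B" unfolding B_def using z by blast
    hence xS: "R / D \<le> S" using cSup_upper[OF _ Bbdd] pb unfolding S_def by simp
    have "R / (D + 2 * rho_0) = R * (R/D) / (R + 2 * rho_0 * (R/D))"
    proof -
      have e1: "R + 2 * rho_0 * (R/D) = R * (D + 2 * rho_0) / D"
        using pb(1) by (simp add: field_simps)
      have "R * (R/D) / (R + 2 * rho_0 * (R/D)) = (R * R / D) / (R * (D + 2 * rho_0) / D)"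
        unfolding e1 by simp
      also have "\<dots> = (R * R) / (R * (D + 2 * rho_0))" using pb(1) by simp
      also have "\<dots> = R / (D + 2 * rho_0)" using assms(8) by simp
      finally show ?thesis by simp
    qed
    also have "\<dots> \<le> R * S / (R + 2 * rho_0 * S)"
    proof -
      have mono: "\<And>x y. 0 < x \<Longrightarrow> x \<le> y \<Longrightarrow> R * x / (R + 2 * rho_0 * x) \<le> R * y / (R + 2 * rho_0 * y)"
      proof -
        fix x y :: real assume h: "0 < x" "x \<le> y"
        have p1: "R + 2 * rho_0 * x > 0" "R + 2 * rho_0 * y > 0" using h assms(5,8)
          by (smt (verit) mult_pos_pos)+
        have "R * x * (R + 2 * rho_0 * y) \<le> R * y * (R + 2 * rho_0 * x)"
          using h assms(8) by (simp add: algebra_simps)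
        thus "R * x / (R + 2 * rho_0 * x) \<le> R * y / (R + 2 * rho_0 * y)"
          using p1 by (simp add: divide_simps)
      qed
      show ?thesis by (rule mono) (use xS pb(1) assms(8) in simp_all)
    qed
    finally show ?thesis using pb(3) by simp
  qed
  have "Sup A \<le> R * S / (R + 2 * rho_0 * S)" by (rule cSup_least[OF Ane bound])
  also have "\<dots> < S"
  proof -
    have p: "R + 2 * rho_0 * S > R" using Sp assms(5) by simp
    hence "R * S < S * (R + 2 * rho_0 * S)" using Sp assms(8) by (simp add: algebra_simps)
    moreover have "R + 2 * rho_0 * S > 0" using p assms(8) by linarith
    ultimately show ?thesis by (simp add: pos_divide_less_eq mult.commute)
  qed
  finally have fin: "Sup A < S" .
  have eA: "zeta'_zf R alpha rho_r rho_d rho_s rho_0 T = Sup A" unfolding zeta'_zf_def A_def by (rule refl)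
  have eB: "zeta'_csi R alpha rho_r rho_d rho_s rho_0 T = S" unfolding zeta'_csi_def S_def B_def by (rule refl)
  show ?thesis unfolding eA eB by (rule fin)
qed

end
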